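(* Let $\delta_1,\delta_2\in(0,1)$, $a_1,a_2\in(0,1)$ and $\varepsilon\in\mathbb{R}$ satisfy $$\mathrm{e}^{\varepsilon}\frac{a_1}{1-a_1}=\frac{1-\delta_1}{1-\delta_2}\,\frac{a_2}{1-a_2}.$$ Then for all positive integers $x,y$, $$\mathbb{E}\big[\exp(\varepsilon H^{(a_1,a_2)}(x,y))\big]=\big(\mathrm{e}^{\varepsilon}a_1+(1-a_1)\big)^y\big(\mathrm{e}^{-\varepsilon}a_2+(1-a_2)\big)^x .$$
   Context: Stochastic six vertex (S6V) model: vertices $(i,j)\in\mathbb{Z}_{>0}^2$, each with incoming edges from the left and from below and outgoing edges to the right and upward. Boundary data specify which edges $(0,j)\to(1,j)$ ($j\ge1$) and $(i,0)\to(i,1)$ ($i\ge1$) carry an incoming arrow. Vertices are sampled successively on antidiagonals $i+j=n$, independently given incoming arrows: none in gives none out; two in gives both out; a single arrow from below exits up with probability $\delta_1$, right with probability $1-\delta_1$; a single arrow from the left exits right with probability $\delta_2$, up with probability $1-\delta_2$. The height function $H(x,y)$ is the net number of arrows crossing the segment from $(0,0)$ to $(x+\epsilon,y+\epsilon)$ (small $\epsilon>0$), left-to-right crossings counting $+1$ and right-to-left $-1$. $(a_1,a_2)$ two-sided Bernoulli initial data: boundary arrows independent, present with probability $a_1$ on each edge $(0,j)\to(1,j)$ and with probability $a_2$ on each edge $(i,0)\to(i,1)$; $H^{(a_1,a_2)}$ is the corresponding height function. *)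

theory Defs
  imports Complex_Main
begin

text \<open>A configuration is a pair (Hs, Vs) of sets of occupied edges:
  (i,j) \<in> Hs means the horizontal edge (i,j) -> (i+1,j) carries an arrow (0 \<le> i \<le> x, 1 \<le> j \<le> y);
  (i,j) \<in> Vs means the vertical edge (i,j) -> (i,j+1) carries an arrow (1 \<le> i \<le> x, 0 \<le> j \<le> y).
  Edges (0,j) and (i,0) are the boundary (incoming) edges.\<close>

definition s6v_hedges :: "nat \<Rightarrow> nat \<Rightarrow> (nat \<times> nat) set" where
  "s6v_hedges x y = {0..x} \<times> {1..y}"

definition s6v_vedges :: "nat \<Rightarrow> nat \<Rightarrow> (nat \<times> nat) set" where
  "s6v_vedges x y = {1..x} \<times> {0..y}"

text \<open>Transition probability of a vertex: inputs l (from the left), b (from below);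
  outputs r (to the right), u (upward).\<close>
definition s6v_vertex_weight :: "real \<Rightarrow> real \<Rightarrow> bool \<Rightarrow> bool \<Rightarrow> bool \<Rightarrow> bool \<Rightarrow> real" where
  "s6v_vertex_weight d1 d2 l b r u =
     (if \<not> l \<and> \<not> b then (if \<not> r \<and> \<not> u then 1 else 0)
      else if l \<and> b then (if r \<and> u then 1 else 0)
      else if b then (if u \<and> \<not> r then d1 else if r \<and> \<not> u then 1 - d1 else 0)
      else (if r \<and> \<not> u then d2 else if u \<and> \<not> r then 1 - d2 else 0))"

definition s6v_config_weight ::
  "real \<Rightarrow> real \<Rightarrow> real \<Rightarrow> real \<Rightarrow> nat \<Rightarrow> nat \<Rightarrow> (nat \<times> nat) set \<Rightarrow> (nat \<times> nat) set \<Rightarrow> real" where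
  "s6v_config_weight d1 d2 a1 a2 x y Hs Vs =
     (\<Prod>j\<in>{1..y}. if (0, j) \<in> Hs then a1 else 1 - a1) *
     (\<Prod>i\<in>{1..x}. if (i, 0) \<in> Vs then a2 else 1 - a2) *
     (\<Prod>p\<in>{1..x} \<times> {1..y}.
        s6v_vertex_weight d1 d2 ((fst p - 1, snd p) \<in> Hs) ((fst p, snd p - 1) \<in> Vs)
                                (p \<in> Hs) (p \<in> Vs))"

text \<open>Height function H(x,y): net flux across a curve from (0,0) to (x+eps,y+eps),
  computed along the curve going up through the left boundary edges (0,j), j=1..y
  (left-to-right crossings, +1) and then right through the vertical edges (i,y)->(i,y+1),
  i=1..x (right-to-left crossings, -1).\<close>
definition s6v_height :: "nat \<Rightarrow> nat \<Rightarrow> (nat \<times> nat) set \<Rightarrow> (nat \<times> nat) set \<Rightarrow> int" where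
  "s6v_height x y Hs Vs =
     int (card {j\<in>{1..y}. (0, j) \<in> Hs}) - int (card {i\<in>{1..x}. (i, y) \<in> Vs})"

definition s6v_exp_moment :: "real \<Rightarrow> real \<Rightarrow> real \<Rightarrow> real \<Rightarrow> real \<Rightarrow> nat \<Rightarrow> nat \<Rightarrow> real" where
  "s6v_exp_moment d1 d2 a1 a2 eps x y =
     (\<Sum>Hs\<in>Pow (s6v_hedges x y). \<Sum>Vs\<in>Pow (s6v_vedges x y).
        s6v_config_weight d1 d2 a1 a2 x y Hs Vs * exp (eps * of_int (s6v_height x y Hs Vs)))"

end

theory Submission
  imports Defs
begin

lemma sum_Pow_split:
  assumes "finite E" "e \<in> E"
  shows "(\<Sum>S\<in>Pow E. F S) = (\<Sum>S\<in>Pow (E - {e}). F S + F (insert e S))"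
proof -
  have E: "insert e (E - {e}) = E" using assms by auto
  have P: "Pow E = Pow (E - {e}) \<union> insert e ` Pow (E - {e})"
    using Pow_insert[of e "E - {e}"] E by simp
  have d: "Pow (E - {e}) \<inter> insert e ` Pow (E - {e}) = {}" by auto
  have inj: "inj_on (insert e) (Pow (E - {e}))"
    unfolding inj_on_def by blast
  have "(\<Sum>S\<in>Pow E. F S) = (\<Sum>S\<in>Pow (E - {e}). F S) + (\<Sum>S\<in>insert e ` Pow (E - {e}). F S)"
    unfolding P using assms(1) d by (intro sum.union_disjoint) auto
  also have "(\<Sum>S\<in>insert e ` Pow (E - {e}). F S) = (\<Sum>S\<in>Pow (E - {e}). F (insert e S))"
    using sum.reindex[OF inj] by simp
  finally show ?thesis by (simp add: sum.distrib)
qed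

lemma sum2_split:
  assumes "finite HE" "finite VE" "l \<in> HE" "b \<in> VE"
  shows "(\<Sum>Hs\<in>Pow HE. \<Sum>Vs\<in>Pow VE. F Hs Vs) =
    (\<Sum>Hs\<in>Pow (HE - {l}). \<Sum>Vs\<in>Pow (VE - {b}).
        F Hs Vs + F (insert l Hs) Vs + F Hs (insert b Vs) + F (insert l Hs) (insert b Vs))"
proof -
  have "(\<Sum>Hs\<in>Pow HE. \<Sum>Vs\<in>Pow VE. F Hs Vs) =
     (\<Sum>Hs\<in>Pow (HE - {l}). (\<Sum>Vs\<in>Pow VE. F Hs Vs) + (\<Sum>Vs\<in>Pow VE. F (insert l Hs) Vs))"
    by (rule sum_Pow_split[OF assms(1,3)])
  also have "\<dots> = (\<Sum>Hs\<in>Pow (HE - {l}). (\<Sum>Vs\<in>Pow (VE - {b}). F Hs Vs + F Hs (insert b Vs))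
       + (\<Sum>Vs\<in>Pow (VE - {b}). F (insert l Hs) Vs + F (insert l Hs) (insert b Vs)))"
    by (simp add: sum_Pow_split[OF assms(2,4)])
  finally show ?thesis by (simp add: sum.distrib[symmetric] algebra_simps)
qed

lemma sum_Pow_prod:
  fixes f :: "'a \<Rightarrow> bool \<Rightarrow> real"
  assumes "finite E"
  shows "(\<Sum>S\<in>Pow E. \<Prod>e\<in>E. f e (e \<in> S)) = (\<Prod>e\<in>E. f e False + f e True)"
  using assms
proof (induction E rule: finite_induct)
  case empty
  then show ?case by simp
next
  case (insert a F)
  have "(\<Sum>S\<in>Pow (insert a F). \<Prod>e\<in>insert a F. f e (e \<in> S)) =
     (\<Sum>S\<in>Pow F. (\<Prod>e\<in>insert a F. f e (e \<in> S)) + (\<Prod>e\<in>insert a F. f e (e \<in> insert a S)))"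
    using sum_Pow_split[of "insert a F" a "\<lambda>S. \<Prod>e\<in>insert a F. f e (e \<in> S)"] insert by simp
  also have "\<dots> = (\<Sum>S\<in>Pow F. (f a False + f a True) * (\<Prod>e\<in>F. f e (e \<in> S)))"
  proof (rule sum.cong)
    fix S assume S: "S \<in> Pow F"
    have aS: "a \<notin> S" using S insert by auto
    have 1: "(\<Prod>e\<in>insert a F. f e (e \<in> S)) = f a False * (\<Prod>e\<in>F. f e (e \<in> S))"
      using insert S aS by (subst prod.insert) auto
    have 2: "(\<Prod>e\<in>insert a F. f e (e \<in> insert a S)) = f a True * (\<Prod>e\<in>F. f e (e \<in> S))"
    proof -
      have "(\<Prod>e\<in>F. f e (e \<in> insert a S)) = (\<Prod>e\<in>F. f e (e \<in> S))"
      proof (rule prod.cong[OF refl])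
        fix e assume "e \<in> F" then have "e \<noteq> a" using insert(2) by auto
        then show "f e (e \<in> insert a S) = f e (e \<in> S)" by simp
      qed
      then show ?thesis using insert by simp
    qed
    show "(\<Prod>e\<in>insert a F. f e (e \<in> S)) + (\<Prod>e\<in>insert a F. f e (e \<in> insert a S)) =
       (f a False + f a True) * (\<Prod>e\<in>F. f e (e \<in> S))" using 1 2 by (simp add: algebra_simps)
  qed simp
  also have "\<dots> = (\<Prod>e\<in>insert a F. f e False + f e True)"
    using insert by (simp only: sum_distrib_left[symmetric]) simp
  finally show ?case .
qed

definition bern :: "real \<Rightarrow> bool \<Rightarrow> real" where
  "bern p b = (if b then p else 1 - p)"

definition vwt :: "real \<Rightarrow> real \<Rightarrow> (nat \<times> nat) set \<Rightarrow> (nat \<times> nat) set \<Rightarrow> nat \<times> nat \<Rightarrow> real" where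
  "vwt d1 d2 Hs Vs v = s6v_vertex_weight d1 d2 ((fst v - 1, snd v) \<in> Hs) ((fst v, snd v - 1) \<in> Vs) (v \<in> Hs) (v \<in> Vs)"

definition topf :: "nat \<Rightarrow> nat \<Rightarrow> real \<Rightarrow> (nat \<times> nat) set \<Rightarrow> real" where
  "topf x y c Vs = (\<Prod>e\<in>s6v_vedges x y. if snd e = y \<and> e \<in> Vs then c else 1)"

definition Phi :: "real \<Rightarrow> real \<Rightarrow> real \<Rightarrow> real \<Rightarrow> real \<Rightarrow> nat \<Rightarrow> nat \<Rightarrow> (nat \<times> nat) set
    \<Rightarrow> (nat \<times> nat) set \<Rightarrow> (nat \<times> nat) set \<Rightarrow> real" where
  "Phi d1 d2 p1 p2 c x y Q Hs Vs =
     (\<Prod>e\<in>s6v_hedges x y - Q. bern p1 (e \<in> Hs)) * (\<Prod>e\<in>s6v_vedges x y - Q. bern p2 (e \<in> Vs)) *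
     (\<Prod>v\<in>Q. vwt d1 d2 Hs Vs v) * topf x y c Vs"

lemma burke:
  assumes "p1 * (1 - p2) * (1 - d2) = (1 - p1) * p2 * (1 - d1)"
  shows "bern p1 False * bern p2 False * s6v_vertex_weight d1 d2 False False r u
       + bern p1 True * bern p2 False * s6v_vertex_weight d1 d2 True False r u
       + bern p1 False * bern p2 True * s6v_vertex_weight d1 d2 False True r u
       + bern p1 True * bern p2 True * s6v_vertex_weight d1 d2 True True r u
       = bern p1 r * bern p2 u"
  using assms by (cases r; cases u) (simp_all add: bern_def s6v_vertex_weight_def algebra_simps)

lemma mem_if_ins: "l \<notin> Hs \<Longrightarrow> (e \<in> (if L then insert l Hs else Hs)) = (if e = l then L else e \<in> Hs)"
  by auto

lemma step:
  assumes box: "Q \<subseteq> {1..x} \<times> {1..y}" and v: "(i, j) \<in> Q"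
    and nl: "(i - 1, j) \<notin> Q" and nb: "(i, j - 1) \<notin> Q"
    and bk: "p1 * (1 - p2) * (1 - d2) = (1 - p1) * p2 * (1 - d1)"
  shows "(\<Sum>Hs\<in>Pow (s6v_hedges x y). \<Sum>Vs\<in>Pow (s6v_vedges x y). Phi d1 d2 p1 p2 c x y Q Hs Vs)
       = (\<Sum>Hs\<in>Pow (s6v_hedges x y). \<Sum>Vs\<in>Pow (s6v_vedges x y). Phi d1 d2 p1 p2 c x y (Q - {(i,j)}) Hs Vs)"
proof -
  define HE where "HE = s6v_hedges x y"
  define VE where "VE = s6v_vedges x y"
  define l where "l = (i - 1, j)"
  define b where "b = (i, j - 1)"
  define w where "w = (i, j)"
  have ij: "1 \<le> i" "i \<le> x" "1 \<le> j" "j \<le> y" using box v by auto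
  have fin: "finite HE" "finite VE" unfolding HE_def VE_def s6v_hedges_def s6v_vedges_def by auto
  have lHE: "l \<in> HE" and bVE: "b \<in> VE" and wHE: "w \<in> HE" and wVE: "w \<in> VE"
    using ij unfolding HE_def VE_def s6v_hedges_def s6v_vedges_def l_def b_def w_def by auto
  have wl: "w \<noteq> l" "w \<noteq> b" "l \<notin> Q" "b \<notin> Q" "w \<in> Q"
    using v nl nb unfolding l_def b_def w_def by auto
  define R where "R Hs Vs = (\<Prod>e\<in>HE - Q - {l}. bern p1 (e \<in> Hs)) * (\<Prod>e\<in>VE - Q - {b}. bern p2 (e \<in> Vs)) *
     (\<Prod>v\<in>Q - {w}. vwt d1 d2 Hs Vs v) * topf x y c Vs" for Hs Vs
  have vw_cong: "vwt d1 d2 (if L then insert l Hs else Hs) (if B then insert b Vs else Vs) u = vwt d1 d2 Hs Vs u"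
    if "u \<in> Q - {w}" "l \<notin> Hs" "b \<notin> Vs" for u Hs Vs L B
  proof -
    obtain a d where u: "u = (a, d)" by force
    have ad: "1 \<le> a" "1 \<le> d" "u \<noteq> w" "u \<noteq> l" "u \<noteq> b" using that box wl u by auto
    have "(a - 1, d) \<noteq> l" using ad ij u unfolding l_def w_def by auto
    moreover have "(a, d - 1) \<noteq> b" using ad ij u unfolding b_def w_def by auto
    ultimately show ?thesis using ad that u unfolding vwt_def by (simp add: mem_if_ins)
  qed
  have top_cong: "topf x y c (if B then insert b Vs else Vs) = topf x y c Vs" if "b \<notin> Vs" for Vs B
    unfolding topf_def using that ij by (intro prod.cong refl) (auto simp: mem_if_ins b_def)
  have hcong: "(\<Prod>e\<in>HE - Q - {l}. bern p1 (e \<in> (if L then insert l Hs else Hs))) = (\<Prod>e\<in>HE - Q - {l}. bern p1 (e \<in> Hs))"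
    if "l \<notin> Hs" for Hs L
    using that by (intro prod.cong refl) (auto simp: mem_if_ins)
  have vcong: "(\<Prod>e\<in>VE - Q - {b}. bern p2 (e \<in> (if B then insert b Vs else Vs))) = (\<Prod>e\<in>VE - Q - {b}. bern p2 (e \<in> Vs))"
    if "b \<notin> Vs" for Vs B
    using that by (intro prod.cong refl) (auto simp: mem_if_ins)
  have F1: "Phi d1 d2 p1 p2 c x y Q (if L then insert l Hs else Hs) (if B then insert b Vs else Vs)
      = bern p1 L * bern p2 B * s6v_vertex_weight d1 d2 L B (w \<in> Hs) (w \<in> Vs) * R Hs Vs"
    if "l \<notin> Hs" "b \<notin> Vs" for Hs Vs L B
  proof -
    have e1: "HE - Q = insert l (HE - Q - {l})" using lHE wl by auto
    have e2: "VE - Q = insert b (VE - Q - {b})" using bVE wl by auto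
    have e3: "Q = insert w (Q - {w})" using wl by auto
    have p1: "(\<Prod>e\<in>HE - Q. bern p1 (e \<in> (if L then insert l Hs else Hs))) = bern p1 L * (\<Prod>e\<in>HE - Q - {l}. bern p1 (e \<in> Hs))"
      by (subst e1, subst prod.insert) (use fin that hcong in \<open>auto simp: mem_if_ins\<close>)
    have p2: "(\<Prod>e\<in>VE - Q. bern p2 (e \<in> (if B then insert b Vs else Vs))) = bern p2 B * (\<Prod>e\<in>VE - Q - {b}. bern p2 (e \<in> Vs))"
      by (subst e2, subst prod.insert) (use fin that vcong in \<open>auto simp: mem_if_ins\<close>)
    have fQ: "finite Q" using box finite_subset by blast
    have p3: "(\<Prod>u\<in>Q. vwt d1 d2 (if L then insert l Hs else Hs) (if B then insert b Vs else Vs) u)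
        = s6v_vertex_weight d1 d2 L B (w \<in> Hs) (w \<in> Vs) * (\<Prod>u\<in>Q - {w}. vwt d1 d2 Hs Vs u)"
    proof -
      have "(\<Prod>u\<in>Q. vwt d1 d2 (if L then insert l Hs else Hs) (if B then insert b Vs else Vs) u)
        = vwt d1 d2 (if L then insert l Hs else Hs) (if B then insert b Vs else Vs) w *
          (\<Prod>u\<in>Q - {w}. vwt d1 d2 (if L then insert l Hs else Hs) (if B then insert b Vs else Vs) u)"
        by (subst e3, subst prod.insert) (use fQ in auto)
      also have "(\<Prod>u\<in>Q - {w}. vwt d1 d2 (if L then insert l Hs else Hs) (if B then insert b Vs else Vs) u)
          = (\<Prod>u\<in>Q - {w}. vwt d1 d2 Hs Vs u)"
        using vw_cong that by (intro prod.cong refl) auto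
      also have "vwt d1 d2 (if L then insert l Hs else Hs) (if B then insert b Vs else Vs) w
          = s6v_vertex_weight d1 d2 L B (w \<in> Hs) (w \<in> Vs)"
        unfolding vwt_def using that wl by (simp add: mem_if_ins w_def l_def b_def)
      finally show ?thesis .
    qed
    show ?thesis unfolding Phi_def HE_def[symmetric] VE_def[symmetric] p1 p2 p3 top_cong[OF that(2)] R_def
      by (simp add: algebra_simps)
  qed
  have F2: "Phi d1 d2 p1 p2 c x y (Q - {w}) (if L then insert l Hs else Hs) (if B then insert b Vs else Vs)
      = bern p1 L * bern p2 B * (bern p1 (w \<in> Hs) * bern p2 (w \<in> Vs)) * R Hs Vs"
    if "l \<notin> Hs" "b \<notin> Vs" for Hs Vs L B
  proof -
    have e1: "HE - (Q - {w}) = insert l (insert w (HE - Q - {l}))" using lHE wHE wl by auto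
    have e2: "VE - (Q - {w}) = insert b (insert w (VE - Q - {b}))" using bVE wVE wl by auto
    have p1: "(\<Prod>e\<in>HE - (Q - {w}). bern p1 (e \<in> (if L then insert l Hs else Hs))) = bern p1 L * (bern p1 (w \<in> Hs) * (\<Prod>e\<in>HE - Q - {l}. bern p1 (e \<in> Hs)))"
      by (subst e1, subst prod.insert, simp add: fin, use wl in simp, subst prod.insert) (use fin that hcong wl in \<open>auto simp: mem_if_ins\<close>)
    have p2: "(\<Prod>e\<in>VE - (Q - {w}). bern p2 (e \<in> (if B then insert b Vs else Vs))) = bern p2 B * (bern p2 (w \<in> Vs) * (\<Prod>e\<in>VE - Q - {b}. bern p2 (e \<in> Vs)))"
      by (subst e2, subst prod.insert, simp add: fin, use wl in simp, subst prod.insert) (use fin that vcong wl in \<open>auto simp: mem_if_ins\<close>)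
    have p3: "(\<Prod>u\<in>Q - {w}. vwt d1 d2 (if L then insert l Hs else Hs) (if B then insert b Vs else Vs) u)
          = (\<Prod>u\<in>Q - {w}. vwt d1 d2 Hs Vs u)"
        using vw_cong that by (intro prod.cong refl) auto
    show ?thesis unfolding Phi_def HE_def[symmetric] VE_def[symmetric] p1 p2 p3 top_cong[OF that(2)] R_def
      by (simp add: algebra_simps)
  qed
  have main: "(\<Sum>Hs\<in>Pow HE. \<Sum>Vs\<in>Pow VE. Phi d1 d2 p1 p2 c x y Q Hs Vs)
       = (\<Sum>Hs\<in>Pow HE. \<Sum>Vs\<in>Pow VE. Phi d1 d2 p1 p2 c x y (Q - {w}) Hs Vs)"
    unfolding sum2_split[OF fin lHE bVE]
  proof (intro sum.cong refl)
    fix Hs Vs assume "Hs \<in> Pow (HE - {l})" "Vs \<in> Pow (VE - {b})"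
    then have h: "l \<notin> Hs" "b \<notin> Vs" by auto
    note a1 = F1[OF h, of False False] F1[OF h, of True False] F1[OF h, of False True] F1[OF h, of True True]
    note a2 = F2[OF h, of False False] F2[OF h, of True False] F2[OF h, of False True] F2[OF h, of True True]
    have s: "bern p1 False * bern p2 False + bern p1 True * bern p2 False + bern p1 False * bern p2 True + bern p1 True * bern p2 True = 1"
      by (simp add: bern_def algebra_simps)
    have bb: "bern p1 False * bern p2 False * s6v_vertex_weight d1 d2 False False (w \<in> Hs) (w \<in> Vs)
       + bern p1 True * bern p2 False * s6v_vertex_weight d1 d2 True False (w \<in> Hs) (w \<in> Vs)
       + bern p1 False * bern p2 True * s6v_vertex_weight d1 d2 False True (w \<in> Hs) (w \<in> Vs)
       + bern p1 True * bern p2 True * s6v_vertex_weight d1 d2 True True (w \<in> Hs) (w \<in> Vs)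
       = bern p1 (w \<in> Hs) * bern p2 (w \<in> Vs)" by (rule burke[OF bk])
    have "bern p1 False * bern p2 False * (bern p1 (w \<in> Hs) * bern p2 (w \<in> Vs)) * R Hs Vs +
        bern p1 True * bern p2 False * (bern p1 (w \<in> Hs) * bern p2 (w \<in> Vs)) * R Hs Vs +
        bern p1 False * bern p2 True * (bern p1 (w \<in> Hs) * bern p2 (w \<in> Vs)) * R Hs Vs +
        bern p1 True * bern p2 True * (bern p1 (w \<in> Hs) * bern p2 (w \<in> Vs)) * R Hs Vs
      = (bern p1 False * bern p2 False + bern p1 True * bern p2 False + bern p1 False * bern p2 True + bern p1 True * bern p2 True)
         * (bern p1 (w \<in> Hs) * bern p2 (w \<in> Vs)) * R Hs Vs" by (simp add: algebra_simps)
    also have "\<dots> = (bern p1 (w \<in> Hs) * bern p2 (w \<in> Vs)) * R Hs Vs" using s by simp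
    also have "\<dots> = (bern p1 False * bern p2 False * s6v_vertex_weight d1 d2 False False (w \<in> Hs) (w \<in> Vs)
       + bern p1 True * bern p2 False * s6v_vertex_weight d1 d2 True False (w \<in> Hs) (w \<in> Vs)
       + bern p1 False * bern p2 True * s6v_vertex_weight d1 d2 False True (w \<in> Hs) (w \<in> Vs)
       + bern p1 True * bern p2 True * s6v_vertex_weight d1 d2 True True (w \<in> Hs) (w \<in> Vs)) * R Hs Vs"
      using bb by simp
    finally have fin_eq: "bern p1 False * bern p2 False * (bern p1 (w \<in> Hs) * bern p2 (w \<in> Vs)) * R Hs Vs +
        bern p1 True * bern p2 False * (bern p1 (w \<in> Hs) * bern p2 (w \<in> Vs)) * R Hs Vs +
        bern p1 False * bern p2 True * (bern p1 (w \<in> Hs) * bern p2 (w \<in> Vs)) * R Hs Vs +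
        bern p1 True * bern p2 True * (bern p1 (w \<in> Hs) * bern p2 (w \<in> Vs)) * R Hs Vs
      = (bern p1 False * bern p2 False * s6v_vertex_weight d1 d2 False False (w \<in> Hs) (w \<in> Vs)
       + bern p1 True * bern p2 False * s6v_vertex_weight d1 d2 True False (w \<in> Hs) (w \<in> Vs)
       + bern p1 False * bern p2 True * s6v_vertex_weight d1 d2 False True (w \<in> Hs) (w \<in> Vs)
       + bern p1 True * bern p2 True * s6v_vertex_weight d1 d2 True True (w \<in> Hs) (w \<in> Vs)) * R Hs Vs" .
    show "Phi d1 d2 p1 p2 c x y Q Hs Vs + Phi d1 d2 p1 p2 c x y Q (insert l Hs) Vs +
          Phi d1 d2 p1 p2 c x y Q Hs (insert b Vs) + Phi d1 d2 p1 p2 c x y Q (insert l Hs) (insert b Vs) =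
          Phi d1 d2 p1 p2 c x y (Q - {w}) Hs Vs + Phi d1 d2 p1 p2 c x y (Q - {w}) (insert l Hs) Vs +
          Phi d1 d2 p1 p2 c x y (Q - {w}) Hs (insert b Vs) + Phi d1 d2 p1 p2 c x y (Q - {w}) (insert l Hs) (insert b Vs)"
      using a1 a2 fin_eq by (simp add: algebra_simps)
  qed
  then show ?thesis unfolding HE_def VE_def w_def .
qed


lemma sweep:
  assumes "finite Q" "Q \<subseteq> {1..x} \<times> {1..y}"
    and bk: "p1 * (1 - p2) * (1 - d2) = (1 - p1) * p2 * (1 - d1)"
  shows "(\<Sum>Hs\<in>Pow (s6v_hedges x y). \<Sum>Vs\<in>Pow (s6v_vedges x y). Phi d1 d2 p1 p2 c x y Q Hs Vs)
       = (\<Sum>Hs\<in>Pow (s6v_hedges x y). \<Sum>Vs\<in>Pow (s6v_vedges x y). Phi d1 d2 p1 p2 c x y {} Hs Vs)"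
  using assms(1,2)
proof (induction Q rule: finite_psubset_induct)
  case (psubset Q)
  show ?case
  proof (cases "Q = {}")
    case True
    then show ?thesis by simp
  next
    case False
    then obtain q where "q \<in> Q" by auto
    then obtain w where w: "w \<in> Q" and wmin: "\<And>u. u \<in> Q \<Longrightarrow> fst w + snd w \<le> fst u + snd u"
      using ex_has_least_nat[of "\<lambda>u. u \<in> Q" q "\<lambda>u. fst u + snd u"] by blast
    obtain i j where wij: "w = (i, j)" by force
    have ij: "1 \<le> i" "1 \<le> j" using psubset.prems w wij by auto
    have nl: "(i - 1, j) \<notin> Q" using wmin[of "(i - 1, j)"] ij wij by auto
    have nb: "(i, j - 1) \<notin> Q" using wmin[of "(i, j - 1)"] ij wij by auto
    have "(\<Sum>Hs\<in>Pow (s6v_hedges x y). \<Sum>Vs\<in>Pow (s6v_vedges x y). Phi d1 d2 p1 p2 c x y Q Hs Vs)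
       = (\<Sum>Hs\<in>Pow (s6v_hedges x y). \<Sum>Vs\<in>Pow (s6v_vedges x y). Phi d1 d2 p1 p2 c x y (Q - {(i,j)}) Hs Vs)"
      using step[OF psubset.prems w[unfolded wij] nl nb bk] .
    also have "\<dots> = (\<Sum>Hs\<in>Pow (s6v_hedges x y). \<Sum>Vs\<in>Pow (s6v_vedges x y). Phi d1 d2 p1 p2 c x y {} Hs Vs)"
      using psubset.IH[of "Q - {(i,j)}"] psubset.prems w wij by auto
    finally show ?thesis .
  qed
qed

lemma exp_card:
  assumes "finite A"
  shows "exp (t * real (card {j \<in> A. P j})) = (\<Prod>j\<in>A. if P j then exp t else 1)"
proof -
  have "(\<Prod>j\<in>A. if P j then exp t else 1) = (\<Prod>j\<in>{j \<in> A. P j}. exp t)"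
    using prod.inter_filter[OF assms, of "\<lambda>_. exp t" P] by simp
  also have "\<dots> = exp t ^ card {j \<in> A. P j}" by simp
  finally show ?thesis by (simp add: exp_of_nat_mult[symmetric] mult.commute)
qed


lemma final_sum:
  shows "(\<Sum>Hs\<in>Pow (s6v_hedges x y). \<Sum>Vs\<in>Pow (s6v_vedges x y). Phi d1 d2 p1 p2 c x y {} Hs Vs)
     = ((1 - p2) + p2 * c) ^ x"
proof -
  define HE where "HE = s6v_hedges x y"
  define VE where "VE = s6v_vedges x y"
  have fin: "finite HE" "finite VE" unfolding HE_def VE_def s6v_hedges_def s6v_vedges_def by auto
  have "(\<Sum>Hs\<in>Pow HE. \<Sum>Vs\<in>Pow VE. Phi d1 d2 p1 p2 c x y {} Hs Vs)
     = (\<Sum>Hs\<in>Pow HE. \<Prod>e\<in>HE. bern p1 (e \<in> Hs)) *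
       (\<Sum>Vs\<in>Pow VE. \<Prod>e\<in>VE. bern p2 (e \<in> Vs) * (if snd e = y \<and> e \<in> Vs then c else 1))"
    unfolding sum_product Phi_def topf_def HE_def VE_def by (simp add: prod.distrib mult.assoc)
  also have "(\<Sum>Hs\<in>Pow HE. \<Prod>e\<in>HE. bern p1 (e \<in> Hs)) = 1"
    using sum_Pow_prod[OF fin(1), of "\<lambda>e bb. bern p1 bb"] by (simp add: bern_def)
  also have "(\<Sum>Vs\<in>Pow VE. \<Prod>e\<in>VE. bern p2 (e \<in> Vs) * (if snd e = y \<and> e \<in> Vs then c else 1))
     = (\<Prod>e\<in>VE. if snd e = y then (1 - p2) + p2 * c else 1)"
    unfolding sum_Pow_prod[OF fin(2), of "\<lambda>e bb. bern p2 bb * (if snd e = y \<and> bb then c else 1)"]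
    by (intro prod.cong refl) (simp add: bern_def)
  also have "\<dots> = (\<Prod>e\<in>{e\<in>VE. snd e = y}. (1 - p2) + p2 * c)"
    using prod.inter_filter[OF fin(2), of "\<lambda>_. (1 - p2) + p2 * c" "\<lambda>e. snd e = y"] by simp
  also have "{e\<in>VE. snd e = y} = {1..x} \<times> {y}" unfolding VE_def s6v_vedges_def by auto
  finally show ?thesis unfolding HE_def VE_def by simp
qed


lemma init_point:
  assumes C: "C = exp eps * a1 + (1 - a1)" "C > 0" and p1: "p1 = exp eps * a1 / C"
  shows "s6v_config_weight d1 d2 a1 a2 x y Hs Vs * exp (eps * of_int (s6v_height x y Hs Vs))
     = C ^ y * Phi d1 d2 p1 a2 (exp (- eps)) x y ({1..x} \<times> {1..y}) Hs Vs"
proof -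
  have hH: "s6v_hedges x y - {1..x} \<times> {1..y} = (\<lambda>j. (0, j)) ` {1..y}"
    unfolding s6v_hedges_def by auto
  have hV: "s6v_vedges x y - {1..x} \<times> {1..y} = (\<lambda>i. (i, 0)) ` {1..x}"
    unfolding s6v_vedges_def by auto
  have ph: "(\<Prod>e\<in>s6v_hedges x y - {1..x} \<times> {1..y}. bern p1 (e \<in> Hs)) = (\<Prod>j\<in>{1..y}. bern p1 ((0, j) \<in> Hs))"
    unfolding hH by (subst prod.reindex) (auto simp: inj_on_def)
  have pv: "(\<Prod>e\<in>s6v_vedges x y - {1..x} \<times> {1..y}. bern a2 (e \<in> Vs)) = (\<Prod>i\<in>{1..x}. if (i, 0) \<in> Vs then a2 else 1 - a2)"
    unfolding hV by (subst prod.reindex) (auto simp: inj_on_def bern_def)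
  have fV: "finite (s6v_vedges x y)" unfolding s6v_vedges_def by auto
  have pt: "topf x y (exp (- eps)) Vs = (\<Prod>i\<in>{1..x}. if (i, y) \<in> Vs then exp (- eps) else 1)"
  proof -
    have "topf x y (exp (- eps)) Vs = (\<Prod>e\<in>s6v_vedges x y. if snd e = y then (if e \<in> Vs then exp (- eps) else 1) else 1)"
      unfolding topf_def by (intro prod.cong refl) auto
    also have "\<dots> = (\<Prod>e\<in>{e \<in> s6v_vedges x y. snd e = y}. if e \<in> Vs then exp (- eps) else 1)"
      using prod.inter_filter[OF fV, of "\<lambda>e. if e \<in> Vs then exp (- eps) else 1" "\<lambda>e. snd e = y"] by simp
    also have "{e \<in> s6v_vedges x y. snd e = y} = (\<lambda>i. (i, y)) ` {1..x}" unfolding s6v_vedges_def by auto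
    finally show ?thesis by (subst (asm) prod.reindex) (auto simp: inj_on_def)
  qed
  have eT: "exp (- eps * real (card {i \<in> {1..x}. (i, y) \<in> Vs})) = (\<Prod>i\<in>{1..x}. if (i, y) \<in> Vs then exp (- eps) else 1)"
    by (rule exp_card) simp
  have eL: "exp (eps * real (card {j \<in> {1..y}. (0, j) \<in> Hs})) = (\<Prod>j\<in>{1..y}. if (0, j) \<in> Hs then exp eps else 1)"
    by (rule exp_card) simp
  have ex: "exp (eps * of_int (s6v_height x y Hs Vs)) = exp (eps * real (card {j \<in> {1..y}. (0, j) \<in> Hs})) * exp (- eps * real (card {i \<in> {1..x}. (i, y) \<in> Vs}))"
    unfolding s6v_height_def by (simp add: exp_add[symmetric] algebra_simps)
  have pl: "(\<Prod>j\<in>{1..y}. if (0, j) \<in> Hs then a1 else 1 - a1) * (\<Prod>j\<in>{1..y}. if (0, j) \<in> Hs then exp eps else 1)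
      = C ^ y * (\<Prod>j\<in>{1..y}. bern p1 ((0, j) \<in> Hs))"
  proof -
    have "(\<Prod>j\<in>{1..y}. if (0, j) \<in> Hs then a1 else 1 - a1) * (\<Prod>j\<in>{1..y}. if (0, j) \<in> Hs then exp eps else 1)
       = (\<Prod>j\<in>{1..y}. C * bern p1 ((0, j) \<in> Hs))"
      unfolding prod.distrib[symmetric] using C p1 by (intro prod.cong refl) (auto simp: bern_def field_simps)
    also have "\<dots> = C ^ y * (\<Prod>j\<in>{1..y}. bern p1 ((0, j) \<in> Hs))" by (simp add: prod.distrib)
    finally show ?thesis .
  qed
  have pvw: "(\<Prod>p\<in>{1..x} \<times> {1..y}. s6v_vertex_weight d1 d2 ((fst p - 1, snd p) \<in> Hs) ((fst p, snd p - 1) \<in> Vs) (p \<in> Hs) (p \<in> Vs))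
     = (\<Prod>v\<in>{1..x} \<times> {1..y}. vwt d1 d2 Hs Vs v)" unfolding vwt_def ..
  show ?thesis
    unfolding s6v_config_weight_def Phi_def ph pv pt ex eT eL pvw
    using pl by (simp add: algebra_simps)
qed


theorem lemma3p2:
  fixes d1 d2 a1 a2 eps :: real and x y :: nat
  assumes "0 < d1" "d1 < 1" "0 < d2" "d2 < 1"
    and "0 < a1" "a1 < 1" "0 < a2" "a2 < 1"
    and "exp eps * (a1 / (1 - a1)) = (1 - d1) / (1 - d2) * (a2 / (1 - a2))"
    and "0 < x" "0 < y"
  shows "s6v_exp_moment d1 d2 a1 a2 eps x y
           = (exp eps * a1 + (1 - a1)) ^ y * (exp (- eps) * a2 + (1 - a2)) ^ x"
proof -
  define C where "C = exp eps * a1 + (1 - a1)"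
  have Cpos: "C > 0" unfolding C_def using assms by (simp add: add_pos_pos)
  define p1 where "p1 = exp eps * a1 / C"
  have key: "exp eps * a1 * (1 - a2) * (1 - d2) = (1 - a1) * a2 * (1 - d1)"
  proof -
    have n: "1 - a1 \<noteq> 0" "1 - a2 \<noteq> 0" "1 - d2 \<noteq> 0" using assms by auto
    have "exp eps * a1 * (1 - a2) * (1 - d2) = (exp eps * (a1 / (1 - a1))) * ((1 - a1) * (1 - a2) * (1 - d2))"
      using n by (simp add: field_simps)
    also have "\<dots> = ((1 - d1) / (1 - d2) * (a2 / (1 - a2))) * ((1 - a1) * (1 - a2) * (1 - d2))"
      using assms(9) by simp
    also have "\<dots> = ((1 - d1) / (1 - d2) * (1 - d2)) * ((a2 / (1 - a2)) * (1 - a2)) * (1 - a1)"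
      by (simp only: mult_ac)
    also have "\<dots> = (1 - a1) * a2 * (1 - d1)" using n by simp
    finally show ?thesis .
  qed
  have bk: "p1 * (1 - a2) * (1 - d2) = (1 - p1) * a2 * (1 - d1)"
  proof -
    have "1 - p1 = (1 - a1) / C" unfolding p1_def using Cpos by (simp add: field_simps C_def)
    note q = this
    have "p1 * (1 - a2) * (1 - d2) = (exp eps * a1 * (1 - a2) * (1 - d2)) / C" unfolding p1_def by simp
    also have "\<dots> = ((1 - a1) * a2 * (1 - d1)) / C" using key by simp
    also have "\<dots> = (1 - p1) * a2 * (1 - d1)" unfolding q by simp
    finally show ?thesis .
  qed
  have "s6v_exp_moment d1 d2 a1 a2 eps x y = (\<Sum>Hs\<in>Pow (s6v_hedges x y). \<Sum>Vs\<in>Pow (s6v_vedges x y).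
      C ^ y * Phi d1 d2 p1 a2 (exp (- eps)) x y ({1..x} \<times> {1..y}) Hs Vs)"
    unfolding s6v_exp_moment_def using init_point[OF C_def Cpos p1_def] by simp
  also have "\<dots> = C ^ y * (\<Sum>Hs\<in>Pow (s6v_hedges x y). \<Sum>Vs\<in>Pow (s6v_vedges x y).
      Phi d1 d2 p1 a2 (exp (- eps)) x y ({1..x} \<times> {1..y}) Hs Vs)"
    by (simp add: sum_distrib_left)
  also have "\<dots> = C ^ y * ((1 - a2) + a2 * exp (- eps)) ^ x"
    using sweep[of "{1..x} \<times> {1..y}" x y p1 a2 d2 d1] bk final_sum by simp
  finally show ?thesis unfolding C_def by (simp add: algebra_simps)
qed

end
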